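(* For every nonnegative integer $n$, $$E(n,n,n)=\sum_{k=0}^n\binom{n}{k}^3=\sum_{k=\lceil n/2\rceil}^{n}\binom{n}{k}^2\binom{2k}{n} =\frac{1}{2^n}\sum_{k=\lceil n/2\rceil}^{n}\binom{2k}{n}\binom{2k}{k}\binom{2n-2k}{n-k}$$ $$=\sum_{k=0}^{n}\binom{n+2k}{3k}\binom{2k}{k}\binom{3k}{k}(-4)^{n-k} =\sum_{k=0}^{\lfloor n/2\rfloor}\binom{n+k}{3k}\binom{2k}{k}\binom{3k}{k}2^{n-2k}.$$
   Context: For nonnegative integers $n_1,\dots,n_S$, $E(n_1,\dots,n_S)$ denotes the number of block derangements: $S$ players hold $n_1,\dots,n_S$ distinct cards respectively; all $N=n_1+\dots+n_S$ cards are redealt so that player $j$ again receives exactly $n_j$ cards (only which cards each player gets matters); $E$ counts the deals in which no player receives any card he originally held. Equivalently, $E(n_1,\dots,n_S)$ is the coefficient of $x_1^{n_1}\cdots x_S^{n_S}$ in $\prod_{j=1}^S(x_1+\dots+x_S-x_j)^{n_j}$. By convention $E(0,\dots,0)=1$. *)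

theory Defs
  imports "HOL-Library.FuncSet" Complex_Main
begin

text \<open>The list ns = [n_1,...,n_S] (player j is indexed by j < S).
  Cards are pairs (j, i) with j < S, i < n_j: card i originally held by player j.\<close>

definition cards :: "nat list \<Rightarrow> (nat \<times> nat) set" where
  "cards ns = {(j, i). j < length ns \<and> i < ns ! j}"

definition block_derangements :: "nat list \<Rightarrow> ((nat \<times> nat) \<Rightarrow> nat) set" where
  "block_derangements ns =
     {f \<in> cards ns \<rightarrow>\<^sub>E {..<length ns}.
        (\<forall>j < length ns. card {c \<in> cards ns. f c = j} = ns ! j) \<and>
        (\<forall>c \<in> cards ns. f c \<noteq> fst c)}"

definition E :: "nat list \<Rightarrow> nat" where
  "E ns = card (block_derangements ns)"

end

theory Submission
  imports Defs
begin


definition rf :: "int \<Rightarrow> real" where "rf z = (if z < 0 then 0 else 1 / fact (nat z))"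

lemma rf_step: "rf (z - 1) = of_int z * rf z"
proof (cases "z \<le> 0")
  case True
  then show ?thesis by (cases "z = 0") (simp_all add: rf_def)
next
  case False
  define m where "m = nat z - 1"
  have m: "z = int m + 1" using False m_def by simp
  have n: "nat (int m + 1) = Suc m" by simp
  have "rf (z - 1) = 1 / fact m" using m by (simp add: rf_def)
  moreover have "rf z = 1 / fact (Suc m)" using m n by (simp add: rf_def del: fact_Suc)
  moreover have "(real m + 1) * (1 / fact (Suc m)) = 1 / (fact m :: real)"
  proof -
    have "(fact (Suc m) :: real) = (real m + 1) * fact m" by simp
    moreover have "real m + 1 \<noteq> 0" "1 + real m \<noteq> 0" "(fact m :: real) \<noteq> 0" by simp_all
    moreover have "fact m + fact m * real m \<noteq> (0::real)"
    proof -
      have "(0::real) < fact m" by simp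
      moreover have "0 \<le> fact m * real m" by simp
      ultimately show ?thesis by linarith
    qed
    ultimately show ?thesis by (simp add: field_simps)
  qed
  moreover have "of_int z = real m + 1" using m by simp
  ultimately show ?thesis by simp
qed

lemma rf_up1: "rf z = of_int (z+1) * rf (z+1)"
  using rf_step[of "z+1"] by simp
lemma rf_up2: "rf z = of_int (z+1) * of_int (z+2) * rf (z+2)"
  using rf_up1[of z] rf_up1[of "z+1"] by (simp add: algebra_simps)

lemma binom_rf: "real (A choose B) = fact A * rf (int B) * rf (int A - int B)"
proof (cases "B \<le> A")
  case True
  then have e: "int A - int B = int (A - B)" by simp
  have b: "real (A choose B) = fact A / (fact B * fact (A-B))" using True by (rule binomial_fact)
  have c: "rf (int B) = 1 / fact B" by (simp add: rf_def)
  have d: "rf (int A - int B) = 1 / fact (A - B)" unfolding e by (simp add: rf_def)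
  show ?thesis unfolding b c d by simp
next
  case False then show ?thesis by (simp add: rf_def)
qed

lemma fact2: "(fact (n+2) :: real) = (real n + 2) * (real n + 1) * fact n"
  by (simp add: algebra_simps)
lemma fact1: "(fact (n+1) :: real) = (real n + 1) * fact n"
  by (simp add: algebra_simps)

definition p1 :: "real \<Rightarrow> real \<Rightarrow> real" where
 "p1 x y = 4*y^3 -30*y^2 -18*x*y^2 +78*y +93*x*y +27*x^2*y -72 -128*x -74*x^2 -14*x^3"

definition F1 :: "nat \<Rightarrow> nat \<Rightarrow> real" where "F1 n k = real (n choose k) ^ 3"
definition G1 :: "nat \<Rightarrow> nat \<Rightarrow> real" where
 "G1 n k = (if k = 0 then 0 else p1 (real n) (real k) / (real n + 1) * real ((n+1) choose (k-1)) ^ 3)"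

lemma poly1: "\<And>x y a r s :: real. 
 (x+2)^2 * ((x+2)*(x+1)*a*r*s)^3 - (7*x^2+21*x+16)*((x+1)*a*r*((x-y+1)*s))^3 - 8*(x+1)^2*(a*r*((x-y)*(x-y+1)*s))^3
 = p1 x (y+2)*(x+1)^2 * (a*r*((x-y+1)*s))^3
 - p1 x (y+1)*(x+1)^2 * (a*((y+1)*r)*s)^3"
  unfolding p1_def by algebra

lemma cancel3: "(x::real) + 1 \<noteq> 0 \<Longrightarrow> p / (x+1) * ((x+1)*w)^3 = p*(x+1)^2*w^3"
  by (simp add: power_mult_distrib power3_eq_cube power2_eq_square field_simps)

lemma tele1: "(real n+2)^2 * F1 (n+2) k - (7*real n^2+21*real n+16) * F1 (n+1) k - 8*(real n+1)^2 * F1 n k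
   = G1 n (k+1) - G1 n k"
proof (cases k)
  case 0
  then show ?thesis by (simp add: F1_def G1_def p1_def power2_eq_square power3_eq_cube field_simps)
next
  case (Suc j)
  have nz: "real n + 1 \<noteq> 0" by simp
  define r where "r = rf (int j + 1)"
  define s where "s = rf (int n - int j + 1)"
  have a1: "rf (int (Suc j)) = r" unfolding r_def by (simp add: algebra_simps)
  have a2: "rf (int j) = (real j + 1) * r" unfolding r_def using rf_up1[of "int j"] by simp
  have b2: "rf (int (n+2) - int (Suc j)) = s" unfolding s_def by (rule arg_cong[where f=rf]) simp
  have b1: "rf (int (n+1) - int (Suc j)) = (real n - real j + 1) * s" unfolding s_def using rf_up1[of "int n - int j"] by simp
  have b1': "rf (int (n+1) - int j) = s" unfolding s_def by (rule arg_cong[where f=rf]) simp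
  have b0: "rf (int n - int (Suc j)) = (real n - real j) * (real n - real j + 1) * s" 
    unfolding s_def using rf_up2[of "int n - int j - 1"] by (simp add: algebra_simps)
  have L: "F1 (n+2) k = ((real n+2)*(real n+1)*fact n*r*s)^3"
    unfolding F1_def Suc binom_rf a1 b2 fact2 by simp
  have M: "F1 (n+1) k = ((real n+1)*fact n*r*((real n - real j+1)*s))^3"
    unfolding F1_def Suc binom_rf a1 b1 fact1 by simp
  have N: "F1 n k = (fact n*r*((real n - real j)*(real n - real j + 1)*s))^3"
    unfolding F1_def Suc binom_rf a1 b0 by simp
  have P0: "G1 n (k+1) = p1 (real n) (real j + 2) / (real n + 1) * real ((n+1) choose (Suc j)) ^ 3"
    unfolding G1_def Suc by (simp add: algebra_simps)
  have P: "G1 n (k+1) = p1 (real n) (real j + 2) * (real n + 1)^2 * (fact n*r*((real n - real j+1)*s))^3"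
  proof -
    have "G1 n (k+1) = p1 (real n) (real j + 2) / (real n + 1) * ((real n+1)*(fact n*r*((real n - real j+1)*s)))^3"
      unfolding P0 binom_rf a1 b1 fact1 by (simp add: algebra_simps)
    also have "\<dots> = p1 (real n) (real j + 2) * (real n + 1)^2 * (fact n*r*((real n - real j+1)*s))^3"
      by (rule cancel3[OF nz])
    finally show ?thesis .
  qed
  have Q0: "G1 n k = p1 (real n) (real j + 1) / (real n + 1) * real ((n+1) choose j) ^ 3"
    unfolding G1_def Suc by (simp add: algebra_simps)
  have Q: "G1 n k = p1 (real n) (real j + 1) * (real n + 1)^2 * (fact n*((real j + 1)*r)*s)^3"
  proof -
    have "G1 n k = p1 (real n) (real j + 1) / (real n + 1) * ((real n+1)*(fact n*((real j + 1)*r)*s))^3"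
      unfolding Q0 binom_rf a2 b1' fact1 by (simp add: algebra_simps)
    also have "\<dots> = p1 (real n) (real j + 1) * (real n + 1)^2 * (fact n*((real j + 1)*r)*s)^3"
      by (rule cancel3[OF nz])
    finally show ?thesis .
  qed
  show ?thesis unfolding L M N P Q by (rule poly1)
qed

lemma rf_sh1: "b = a + 1 \<Longrightarrow> rf a = of_int b * rf b"
  using rf_up1[of a] by simp
lemma rf_sh2: "b = a + 2 \<Longrightarrow> rf a = of_int (a+1) * of_int b * rf b"
  using rf_up2[of a] by simp

definition F2 :: "nat \<Rightarrow> nat \<Rightarrow> real" where "F2 n k = real (n choose k) ^ 2 * real ((2*k) choose n)"
definition G2 :: "nat \<Rightarrow> nat \<Rightarrow> real" where
 "G2 n k = (if k = 0 then 0 else real k * (4*real k - 6*real n - 12) * real ((n+1) choose (k-1)) ^ 2 * real ((2*k-1) choose (n+1)))"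

lemma poly2: "\<And>x y a r s f u v :: real.
 (x+2)^2 * (((x+2)*(x+1)*a*r*s)^2 * ((2*y+2)*f) * u * ((2*y-x+1)*(2*y-x+2)*v))
 - (7*x^2+21*x+16) * (((x+1)*a*r*((x-y+1)*s))^2 * ((2*y+2)*f) * ((x+2)*u) * ((2*y-x+2)*v))
 - 8*(x+1)^2 * ((a*r*((x-y)*(x-y+1)*s))^2 * ((2*y+2)*f) * ((x+1)*(x+2)*u) * v)
 = (y+2)*(4*(y+2)-6*x-12) * ((x+1)*a*r*((x-y+1)*s))^2 * ((2*y+3)*(2*y+2)*f) * ((x+2)*u) * v
 - (y+1)*(4*(y+1)-6*x-12) * ((x+1)*a*((y+1)*r)*s)^2 * f * ((x+2)*u) * ((2*y-x+1)*(2*y-x+2)*v)"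
  by algebra

lemma tele2: "(real n+2)^2 * F2 (n+2) k - (7*real n^2+21*real n+16) * F2 (n+1) k - 8*(real n+1)^2 * F2 n k
   = G2 n (k+1) - G2 n k"
proof (cases k)
  case 0
  then show ?thesis by (cases n) (simp_all add: F2_def G2_def)
next
  case (Suc j)
  define r where "r = rf (int (Suc j))"
  define s where "s = rf (int (n+1) - int j)"
  define u where "u = rf (int (n+2))"
  define v where "v = rf (int (2*Suc j) - int n)"
  define f where "f = (fact (2*j+1) :: real)"
  have r0: "rf (int j) = (real j + 1) * r" unfolding r_def by (subst rf_sh1[where b="int (Suc j)"]) simp_all
  have s2: "rf (int (n+2) - int (Suc j)) = s" unfolding s_def by (rule arg_cong[where f=rf]) simp
  have s1: "rf (int (n+1) - int (Suc j)) = (real n - real j + 1) * s" unfolding s_def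
    by (subst rf_sh1[where b="int (n+1) - int j"]) simp_all
  have s0: "rf (int n - int (Suc j)) = (real n - real j) * (real n - real j + 1) * s" unfolding s_def
    by (subst rf_sh2[where b="int (n+1) - int j"]) (simp_all add: algebra_simps)
  have u1: "rf (int (n+1)) = (real n + 2) * u" unfolding u_def
    by (subst rf_sh1[where b="int (n+2)"]) simp_all
  have u0: "rf (int n) = (real n + 1) * (real n + 2) * u" unfolding u_def
    by (subst rf_sh2[where b="int (n+2)"]) (simp_all add: algebra_simps)
  have v2: "rf (int (2*Suc j) - int (n+2)) = (2*real j - real n + 1) * (2*real j - real n + 2) * v" unfolding v_def
    by (subst rf_sh2[where b="int (2*Suc j) - int n"]) (simp_all add: algebra_simps)
  have v1: "rf (int (2*Suc j) - int (n+1)) = (2*real j - real n + 2) * v" unfolding v_def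
    by (subst rf_sh1[where b="int (2*Suc j) - int n"]) (simp_all add: algebra_simps)
  have v1': "rf (int (2*Suc j - 1) - int (n+1)) = (2*real j - real n + 1) * (2*real j - real n + 2) * v" unfolding v_def
    by (subst rf_sh2[where b="int (2*Suc j) - int n"]) (simp_all add: algebra_simps)
  have v0': "rf (int (2*Suc (Suc j) - 1) - int (n+1)) = v" unfolding v_def
    by (rule arg_cong[where f=rf]) simp
  have f2: "(fact (2*Suc j) :: real) = (2*real j + 2) * f" unfolding f_def
    by (simp add: algebra_simps)
  have f1: "(fact (2*Suc j - 1) :: real) = f" unfolding f_def by simp
  have f3: "(fact (2*Suc (Suc j) - 1) :: real) = (2*real j + 3) * (2*real j + 2) * f" unfolding f_def
    by (simp add: algebra_simps numeral_3_eq_3)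
  have L: "F2 (n+2) k = ((real n+2)*(real n+1)*fact n*r*s)^2 * ((2*real j+2)*f) * u * ((2*real j - real n+1)*(2*real j - real n+2)*v)"
    unfolding F2_def Suc binom_rf r_def[symmetric] s2 u_def[symmetric] v2 f2 fact2 by simp
  have M: "F2 (n+1) k = ((real n+1)*fact n*r*((real n - real j+1)*s))^2 * ((2*real j+2)*f) * ((real n + 2)*u) * ((2*real j - real n+2)*v)"
    unfolding F2_def Suc binom_rf r_def[symmetric] s1 u1 v1 f2 fact1 by simp
  have N: "F2 n k = (fact n*r*((real n - real j)*(real n - real j+1)*s))^2 * ((2*real j+2)*f) * ((real n + 1)*(real n + 2)*u) * v"
    unfolding F2_def Suc binom_rf r_def[symmetric] s0 u0 v_def[symmetric] f2 by simp
  have P: "G2 n (k+1) = (real j+2)*(4*(real j+2)-6*real n-12) * ((real n+1)*fact n*r*((real n - real j+1)*s))^2 * ((2*real j+3)*(2*real j+2)*f) * ((real n+2)*u) * v"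
  proof -
    have "G2 n (k+1) = real (Suc (Suc j)) * (4*real (Suc (Suc j)) - 6*real n - 12) * real ((n+1) choose (Suc j)) ^ 2 * real ((2*Suc (Suc j)-1) choose (n+1))"
      unfolding G2_def Suc by simp
    then show ?thesis unfolding binom_rf r_def[symmetric] s1 u1 v0' f3 fact1 by (simp add: algebra_simps)
  qed
  have Q: "G2 n k = (real j+1)*(4*(real j+1)-6*real n-12) * ((real n+1)*fact n*((real j+1)*r)*s)^2 * f * ((real n+2)*u) * ((2*real j - real n+1)*(2*real j - real n+2)*v)"
  proof -
    have "G2 n k = real (Suc j) * (4*real (Suc j) - 6*real n - 12) * real ((n+1) choose j) ^ 2 * real ((2*Suc j-1) choose (n+1))"
      unfolding G2_def Suc by simp
    then show ?thesis unfolding binom_rf r0 s_def[symmetric] u1 v1' f1 fact1 by (simp add: algebra_simps)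
  qed
  show ?thesis unfolding L M N P Q by (rule poly2)
qed



lemma rf_fact: "rf (int m) * fact m = 1"
  by (simp add: rf_def)

lemma fact2': "(fact (m+2) :: real) = (real m + 1) * (real m + 2) * fact m"
  by (simp add: algebra_simps)

definition F4 :: "nat \<Rightarrow> nat \<Rightarrow> real" where
 "F4 n k = real ((n + 2 * k) choose (3 * k)) * real ((2 * k) choose k) * real ((3 * k) choose k) * (-4) ^ (n - k)"
definition G4 :: "nat \<Rightarrow> nat \<Rightarrow> real" where
 "G4 n k = -3*(3*real n+5)*fact (n+2*k)*rf (int k - 1)^3*rf (int n + 2 - int k)*(-4)^(n+2)*(-1/4)^k"

lemma F4_rf: "F4 n k = fact (n+2*k) * rf (int k)^3 * rf (int n - int k) * (-4)^n * (-1/4)^k"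
proof (cases "k \<le> n")
  case True
  have e: "((-4)::real)^(n-k) = (-4)^n * (-1/4)^k"
  proof -
    have "((-4)::real)^n = (-4)^(n-k) * (-4)^k" using True by (simp flip: power_add)
    then show ?thesis by (simp add: power_divide field_simps flip: power_mult_distrib)
  qed
  have r3: "rf (int (3*k)) * fact (3*k) = 1" "rf (int (2*k)) * fact (2*k) = 1"
    by (rule rf_fact)+
  have "F4 n k = (fact (n+2*k) * rf (int (3*k)) * rf (int (n+2*k) - int (3*k))) * (fact (2*k) * rf (int k) * rf (int (2*k) - int k))
     * (fact (3*k) * rf (int k) * rf (int (3*k) - int k)) * (-4)^(n-k)"
    unfolding F4_def binom_rf by simp
  also have "\<dots> = fact (n+2*k) * rf (int k)^3 * rf (int n - int k) * (-4)^(n-k) * (rf (int (3*k)) * fact (3*k)) * (rf (int (2*k)) * fact (2*k))"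
    by (simp add: power3_eq_cube algebra_simps)
  finally show ?thesis unfolding r3 e by simp
next
  case False
  then show ?thesis by (simp add: F4_def rf_def)
qed

lemma poly4: "\<And>x y a r s e q :: real.
  (x+2)^2 * ((x+2*y+1)*(x+2*y+2)*a * r^3 * s * (16*e) * q)
  - (7*x^2+21*x+16) * ((x+2*y+1)*a * r^3 * ((x-y+2)*s) * (-4*e) * q)
  - 8*(x+1)^2 * (a * r^3 * ((x-y+1)*(x-y+2)*s) * e * q)
  = -3*(3*x+5)*((x+2*y+1)*(x+2*y+2)*a)*r^3*((x-y+2)*s)*(16*e)*(-1/4*q)
  - (-3*(3*x+5)*a*(y*r)^3*s*(16*e)*q)"
  by algebra

lemma tele4: "(real n+2)^2 * F4 (n+2) k - (7*real n^2+21*real n+16) * F4 (n+1) k - 8*(real n+1)^2 * F4 n k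
   = G4 n (k+1) - G4 n k"
proof -
  define a where "a = (fact (n+2*k) :: real)"
  define r where "r = rf (int k)"
  define s where "s = rf (int n + 2 - int k)"
  define e where "e = ((-4)::real)^n"
  define q where "q = ((-1/4)::real)^k"
  have a2: "(fact (n+2+2*k) :: real) = (real n+2*real k+1)*(real n+2*real k+2)*a"
    unfolding a_def using fact2'[of "n+2*k"] by (simp add: algebra_simps)
  have a1: "(fact (n+1+2*k) :: real) = (real n+2*real k+1)*a"
    unfolding a_def using fact1[of "n+2*k"] by (simp add: algebra_simps)
  have a2': "(fact (n+2*(k+1)) :: real) = (real n+2*real k+1)*(real n+2*real k+2)*a"
    unfolding a_def using fact2'[of "n+2*k"] by (simp add: algebra_simps)
  have s2: "rf (int (n+2) - int k) = s" unfolding s_def by (rule arg_cong[where f=rf]) simp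
  have s1: "rf (int (n+1) - int k) = (real n - real k + 2) * s" unfolding s_def
    by (subst rf_sh1[where b="int n + 2 - int k"]) (simp_all add: algebra_simps)
  have s1': "rf (int n + 2 - int (k+1)) = (real n - real k + 2) * s" unfolding s_def
    by (subst rf_sh1[where b="int n + 2 - int k"]) (simp_all add: algebra_simps)
  have s0: "rf (int n - int k) = (real n - real k + 1) * (real n - real k + 2) * s" unfolding s_def
    by (subst rf_sh2[where b="int n + 2 - int k"]) (simp_all add: algebra_simps)
  have r1: "rf (int k - 1) = real k * r" unfolding r_def by (simp add: rf_step)
  have r1': "rf (int (k+1) - 1) = r" unfolding r_def by simp
  have e2: "((-4)::real)^(n+2) = 16*e" unfolding e_def by (simp add: power_add)
  have e1: "((-4)::real)^(n+1) = -4*e" unfolding e_def by (simp add: power_add)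
  have q1: "((-1/4)::real)^(k+1) = -1/4*q" unfolding q_def by (simp add: power_add)
  have L: "F4 (n+2) k = (real n+2*real k+1)*(real n+2*real k+2)*a * r^3 * s * (16*e) * q"
    unfolding F4_rf a2 s2 e2 r_def[symmetric] q_def[symmetric] by simp
  have M: "F4 (n+1) k = (real n+2*real k+1)*a * r^3 * ((real n - real k+2)*s) * (-4*e) * q"
    unfolding F4_rf a1 s1 e1 r_def[symmetric] q_def[symmetric] by simp
  have N: "F4 n k = a * r^3 * ((real n - real k+1)*(real n - real k+2)*s) * e * q"
    unfolding F4_rf s0 e_def[symmetric] a_def[symmetric] r_def[symmetric] q_def[symmetric] by simp
  have P: "G4 n (k+1) = -3*(3*real n+5)*((real n+2*real k+1)*(real n+2*real k+2)*a)*r^3*((real n - real k+2)*s)*(16*e)*(-1/4*q)"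
    unfolding G4_def a2' r1' s1' e2 q1 by simp
  have Q: "G4 n k = -3*(3*real n+5)*a*(real k*r)^3*s*(16*e)*q"
    unfolding G4_def r1 e2 a_def[symmetric] s_def[symmetric] q_def[symmetric] by simp
  show ?thesis unfolding L M N P Q by (rule poly4)
qed



definition F5 :: "nat \<Rightarrow> nat \<Rightarrow> real" where
 "F5 n k = real ((n + k) choose (3 * k)) * real ((2 * k) choose k) * real ((3 * k) choose k) * 2 ^ (n - 2 * k)"
definition G5 :: "nat \<Rightarrow> nat \<Rightarrow> real" where
 "G5 n k = -6*(3*real n+4)*fact (n+k)*rf (int n + 2 - 2*int k)*rf (int k - 1)^3*2^(n+2)*(1/4)^k"

lemma F5_rf: "F5 n k = fact (n+k) * rf (int k)^3 * rf (int n - 2*int k) * 2^n * (1/4)^k"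
proof (cases "2*k \<le> n")
  case True
  have e: "(2::real)^(n-2*k) = 2^n * (1/4)^k"
  proof -
    have "(2::real)^n = 2^(n-2*k) * 2^(2*k)" using True by (simp flip: power_add)
    moreover have h4: "(4::real)^k = 2^(2*k)" by (simp add: power_mult)
    ultimately show ?thesis by (simp add: power_divide)
  qed
  have r3: "rf (int (3*k)) * fact (3*k) = 1" "rf (int (2*k)) * fact (2*k) = 1"
    by (rule rf_fact)+
  have a: "rf (int (n+k) - int (3*k)) = rf (int n - 2*int k)" by (rule arg_cong[where f=rf]) simp
  have "F5 n k = (fact (n+k) * rf (int (3*k)) * rf (int (n+k) - int (3*k))) * (fact (2*k) * rf (int k) * rf (int (2*k) - int k))
     * (fact (3*k) * rf (int k) * rf (int (3*k) - int k)) * 2^(n-2*k)"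
    unfolding F5_def binom_rf by simp
  also have "\<dots> = fact (n+k) * rf (int k)^3 * rf (int n - 2*int k) * 2^(n-2*k) * (rf (int (3*k)) * fact (3*k)) * (rf (int (2*k)) * fact (2*k))"
    unfolding a by (simp add: power3_eq_cube algebra_simps)
  finally show ?thesis unfolding r3 e by simp
next
  case False
  then show ?thesis by (simp add: F5_def rf_def)
qed

lemma poly5: "\<And>x y a r s e q :: real.
  (x+2)^2 * ((x+y+1)*(x+y+2)*a * r^3 * s * (4*e) * q)
  - (7*x^2+21*x+16) * ((x+y+1)*a * r^3 * ((x-2*y+2)*s) * (2*e) * q)
  - 8*(x+1)^2 * (a * r^3 * ((x-2*y+1)*(x-2*y+2)*s) * e * q)
  = -6*(3*x+4)*((x+y+1)*a)*((x-2*y+1)*(x-2*y+2)*s)*r^3*(4*e)*(1/4*q)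
  - (-6*(3*x+4)*a*s*(y*r)^3*(4*e)*q)"
  by algebra

lemma tele5: "(real n+2)^2 * F5 (n+2) k - (7*real n^2+21*real n+16) * F5 (n+1) k - 8*(real n+1)^2 * F5 n k
   = G5 n (k+1) - G5 n k"
proof -
  define a where "a = (fact (n+k) :: real)"
  define r where "r = rf (int k)"
  define s where "s = rf (int n + 2 - 2*int k)"
  define e where "e = (2::real)^n"
  define q where "q = ((1/4)::real)^k"
  have a2: "(fact (n+2+k) :: real) = (real n+real k+1)*(real n+real k+2)*a"
    unfolding a_def using fact2'[of "n+k"] by (simp add: algebra_simps)
  have a1: "(fact (n+1+k) :: real) = (real n+real k+1)*a"
    unfolding a_def using fact1[of "n+k"] by (simp add: algebra_simps)
  have a1': "(fact (n+(k+1)) :: real) = (real n+real k+1)*a"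
    unfolding a_def using fact1[of "n+k"] by (simp add: algebra_simps)
  have s2: "rf (int (n+2) - 2*int k) = s" unfolding s_def by (rule arg_cong[where f=rf]) simp
  have s1: "rf (int (n+1) - 2*int k) = (real n - 2*real k + 2) * s" unfolding s_def
    by (subst rf_sh1[where b="int n + 2 - 2*int k"]) (simp_all add: algebra_simps)
  have s0: "rf (int n - 2*int k) = (real n - 2*real k + 1) * (real n - 2*real k + 2) * s" unfolding s_def
    by (subst rf_sh2[where b="int n + 2 - 2*int k"]) (simp_all add: algebra_simps)
  have s0': "rf (int n + 2 - 2*int (k+1)) = (real n - 2*real k + 1) * (real n - 2*real k + 2) * s" unfolding s_def
    by (subst rf_sh2[where b="int n + 2 - 2*int k"]) (simp_all add: algebra_simps)
  have r1: "rf (int k - 1) = real k * r" unfolding r_def by (simp add: rf_step)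
  have r1': "rf (int (k+1) - 1) = r" unfolding r_def by simp
  have e2: "(2::real)^(n+2) = 4*e" unfolding e_def by (simp add: power_add)
  have e1: "(2::real)^(n+1) = 2*e" unfolding e_def by (simp add: power_add)
  have q1: "((1/4)::real)^(k+1) = 1/4*q" unfolding q_def by (simp add: power_add)
  have L: "F5 (n+2) k = (real n+real k+1)*(real n+real k+2)*a * r^3 * s * (4*e) * q"
    unfolding F5_rf a2 s2 e2 r_def[symmetric] q_def[symmetric] by simp
  have M: "F5 (n+1) k = (real n+real k+1)*a * r^3 * ((real n - 2*real k+2)*s) * (2*e) * q"
    unfolding F5_rf a1 s1 e1 r_def[symmetric] q_def[symmetric] by simp
  have N: "F5 n k = a * r^3 * ((real n - 2*real k+1)*(real n - 2*real k+2)*s) * e * q"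
    unfolding F5_rf s0 e_def[symmetric] a_def[symmetric] r_def[symmetric] q_def[symmetric] by simp
  have P: "G5 n (k+1) = -6*(3*real n+4)*((real n+real k+1)*a)*((real n - 2*real k+1)*(real n - 2*real k+2)*s)*r^3*(4*e)*(1/4*q)"
    unfolding G5_def a1' r1' s0' e2 q1 by simp
  have Q: "G5 n k = -6*(3*real n+4)*a*s*(real k*r)^3*(4*e)*q"
    unfolding G5_def r1 e2 a_def[symmetric] s_def[symmetric] q_def[symmetric] by simp
  show ?thesis unfolding L M N P Q by (rule poly5)
qed



definition cbx :: "int \<Rightarrow> real" where
 "cbx z = (if z < 0 then 0 else real ((2 * nat z) choose (nat z)))"

lemma cbx_nat: "cbx (int m) = fact (2*m) * rf (int m)^2"
proof -
  have "cbx (int m) = real ((2*m) choose m)" by (simp add: cbx_def)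
  also have "\<dots> = fact (2*m) * rf (int m) * rf (int (2*m) - int m)" by (rule binom_rf)
  also have "int (2*m) - int m = int m" by simp
  finally show ?thesis by (simp add: power2_eq_square)
qed

lemma cbx_rec: "of_int (z+1) * cbx (z+1) = 2*(2*of_int z+1) * cbx z"
proof (cases "z < 0")
  case True
  then have "z = -1 \<or> z < -1" by linarith
  then show ?thesis
  proof
    assume "z = -1" then show ?thesis by (simp add: cbx_def)
  next
    assume "z < -1" then show ?thesis by (simp add: cbx_def)
  qed
next
  case False
  define m where "m = nat z"
  have z: "z = int m" using False m_def by simp
  have z1: "z + 1 = int (m+1)" using z by simp
  have f: "(fact (2*(m+1)) :: real) = (2*real m+1)*(2*real m+2)*fact (2*m)"
    using fact2'[of "2*m"] by (simp add: algebra_simps)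
  have r: "rf (int m) = (real m + 1) * rf (int (m+1))"
    using rf_up1[of "int m"] by (simp add: add.commute)
  show ?thesis unfolding z1 unfolding z cbx_nat f r
    by (simp add: power2_eq_square algebra_simps)
qed

lemma cbx_down: "cbx z = of_int (z+1) * cbx (z+1) / (2*(2*of_int z+1))"
proof -
  have "2*z+1 \<noteq> 0" by presburger
  then have "2*(2*of_int z+1) \<noteq> (0::real)" by (metis of_int_0_eq_iff of_int_1 of_int_add of_int_mult mult_eq_0_iff of_int_numeral zero_neq_numeral)
  then show ?thesis using cbx_rec[of z] by (simp add: field_simps)
qed

definition P3 :: "real \<Rightarrow> real \<Rightarrow> real" where
 "P3 x y = -28+24*y-4*y^2-48*x+26*x*y-2*x*y^2-27*x^2+7*x^2*y-5*x^3"

definition F3 :: "nat \<Rightarrow> nat \<Rightarrow> real" where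
 "F3 n k = real ((2*k) choose n) * real ((2*k) choose k) * cbx (int n - int k) * (1/2)^n"
definition G3 :: "nat \<Rightarrow> nat \<Rightarrow> real" where
 "G3 n k = P3 (real n) (real k) * real ((2*k) choose (n+2)) * real ((2*k) choose k) * (1/2)^(n+2)
      * (cbx (int n + 2 - int k) / (2*real n - 2*real k + 3))"

lemma poly3: "\<And>x y a u v r W h :: real.
 (x+2)^2 * ((a*u*((2*y-x-1)*(2*y-x)*v)) * (a*r*((y+1)*((y+1)*r))) * (4*(2*(x-y)+3)*(2*(x-y)+1)*W) * h)
 - (7*x^2+21*x+16) * ((a*((x+2)*u)*((2*y-x)*v)) * (a*r*((y+1)*((y+1)*r))) * (2*(x-y+2)*(2*(x-y)+1)*W) * (2*h))
 - 8*(x+1)^2 * ((a*((x+1)*(x+2)*u)*v) * (a*r*((y+1)*((y+1)*r))) * ((x-y+1)*(x-y+2)*W) * (4*h))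
 = P3 x (y+1) * (((2*y+1)*(2*y+2)*a) * u * v) * (((2*y+1)*(2*y+2)*a) * r * r) * h * (2*(x-y+2)*W)
 - P3 x y * (a*u*((2*y-x-1)*(2*y-x)*v)) * (a*r*((y+1)*((y+1)*r))) * h * (4*(2*(x-y)+1)*W)"
  unfolding P3_def by algebra

lemma odd_nz: "2 * (of_int z :: real) + 1 \<noteq> 0"
proof
  assume "2 * (of_int z :: real) + 1 = 0"
  then have "of_int (2*z+1) = (0::real)" by simp
  then have "2*z+1 = 0" by (simp only: of_int_eq_0_iff)
  then show False by presburger
qed

lemma tele3: "(real n+2)^2 * F3 (n+2) k - (7*real n^2+21*real n+16) * F3 (n+1) k - 8*(real n+1)^2 * F3 n k
   = G3 n (k+1) - G3 n k"
proof -
  define m where "m = int n - int k"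
  have mr: "of_int m = real n - real k" unfolding m_def by simp
  define W where "W = cbx (m+2) / (4*(2*of_int (m+1)+1)*(2*of_int m+1))"
  have nz1: "2*of_int (m+1)+1 \<noteq> (0::real)" by (rule odd_nz)
  have nz0: "2*of_int m+1 \<noteq> (0::real)" by (rule odd_nz)
  have D: "4*(2*of_int (m+1)+1)*(2*of_int m+1) \<noteq> (0::real)" using nz1 nz0 by simp
  have c2': "cbx (m+2) = 4*(2*of_int (m+1)+1)*(2*of_int m+1)*W"
    unfolding W_def using D by simp
  have c2: "cbx (m+2) = 4*(2*(real n - real k)+3)*(2*(real n - real k)+1)*W"
    unfolding c2' by (simp add: mr algebra_simps)
  have c1': "cbx (m+1) = 2 * of_int (m+2) * (2*of_int m+1) * W"
  proof -
    have "cbx (m+1) = of_int (m+2) * cbx (m+2) / (2*(2*of_int (m+1)+1))"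
      using cbx_down[of "m+1"] by (simp add: add.assoc)
    also have "\<dots> = of_int (m+2) * (4*(2*of_int (m+1)+1)*(2*of_int m+1)*W) / (2*(2*of_int (m+1)+1))"
      unfolding c2' ..
    also have "\<dots> = 2 * of_int (m+2) * (2*of_int m+1) * W"
      using nz1 by (simp add: field_simps)
    finally show ?thesis .
  qed
  have c1: "cbx (m+1) = 2*(real n - real k+2)*(2*(real n - real k)+1)*W"
    unfolding c1' by (simp add: mr algebra_simps)
  have c0: "cbx m = (real n - real k+1)*(real n - real k+2)*W"
  proof -
    have "cbx m = of_int (m+1) * cbx (m+1) / (2*(2*of_int m+1))"
      using cbx_down[of "m"] by simp
    also have "\<dots> = of_int (m+1) * (2 * of_int (m+2) * (2*of_int m+1) * W) / (2*(2*of_int m+1))"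
      unfolding c1' ..
    also have "\<dots> = of_int (m+1) * of_int (m+2) * W"
      using nz0 by (simp add: field_simps)
    finally show ?thesis by (simp add: mr algebra_simps)
  qed
  have g1: "cbx (int n + 2 - int (k+1)) / (2*real n - 2*real (k+1) + 3) = 2*(real n - real k+2)*W"
  proof -
    have e1: "int n + 2 - int (k+1) = m+1" unfolding m_def by simp
    have e2: "2*real n - 2*real (k+1) + 3 = 2*of_int m+1" by (simp add: mr)
    have "cbx (m+1) / (2*of_int m+1) = 2 * of_int (m+2) * (2*of_int m+1) * W / (2*of_int m+1)"
      unfolding c1' ..
    also have "\<dots> = 2*of_int (m+2)*W" using nz0 by (simp add: field_simps)
    finally have "cbx (m+1) / (2*of_int m+1) = 2*of_int (m+2)*W" .
    then show ?thesis unfolding e1 e2 by (simp add: mr algebra_simps)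
  qed
  have g0: "cbx (int n + 2 - int k) / (2*real n - 2*real k + 3) = 4*(2*(real n - real k)+1)*W"
  proof -
    have e1: "int n + 2 - int k = m+2" unfolding m_def by simp
    have e2: "2*real n - 2*real k + 3 = 2*of_int (m+1)+1" by (simp add: mr)
    have "cbx (m+2) / (2*of_int (m+1)+1) = 4*(2*of_int (m+1)+1)*(2*of_int m+1)*W / (2*of_int (m+1)+1)"
      unfolding c2' ..
    also have "\<dots> = 4*(2*of_int m+1)*W" using nz1 by (simp add: field_simps)
    finally have "cbx (m+2) / (2*of_int (m+1)+1) = 4*(2*of_int m+1)*W" .
    then show ?thesis unfolding e1 e2 by (simp add: mr algebra_simps)
  qed
  have m2: "cbx (int (n+2) - int k) = 4*(2*(real n - real k)+3)*(2*(real n - real k)+1)*W"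
    unfolding c2[symmetric] m_def by (rule arg_cong[where f=cbx]) simp
  have m1: "cbx (int (n+1) - int k) = 2*(real n - real k+2)*(2*(real n - real k)+1)*W"
    unfolding c1[symmetric] m_def by (rule arg_cong[where f=cbx]) simp
  have m0: "cbx (int n - int k) = (real n - real k+1)*(real n - real k+2)*W"
    unfolding c0[symmetric] m_def by simp
  define a where "a = (fact (2*k) :: real)"
  define u where "u = rf (int (n+2))"
  define v where "v = rf (int (2*k) - int n)"
  define r where "r = rf (int (k+1))"
  define h where "h = ((1/2)::real)^(n+2)"
  have u1: "rf (int (n+1)) = (real n + 2) * u" unfolding u_def
    by (subst rf_sh1[where b="int (n+2)"]) simp_all
  have u0: "rf (int n) = (real n + 1) * (real n + 2) * u" unfolding u_def
    by (subst rf_sh2[where b="int (n+2)"]) (simp_all add: algebra_simps)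
  have v2: "rf (int (2*k) - int (n+2)) = (2*real k - real n - 1) * (2*real k - real n) * v" unfolding v_def
    by (subst rf_sh2[where b="int (2*k) - int n"]) (simp_all add: algebra_simps)
  have v1: "rf (int (2*k) - int (n+1)) = (2*real k - real n) * v" unfolding v_def
    by (subst rf_sh1[where b="int (2*k) - int n"]) (simp_all add: algebra_simps)
  have v0': "rf (int (2*(k+1)) - int (n+2)) = v" unfolding v_def
    by (rule arg_cong[where f=rf]) simp
  have r0: "rf (int k) = (real k + 1) * r" unfolding r_def
    by (subst rf_sh1[where b="int (k+1)"]) simp_all
  have kk: "rf (int (2*k) - int k) = (real k + 1) * r" unfolding r0[symmetric]
    by (rule arg_cong[where f=rf]) simp
  have kk': "rf (int (2*(k+1)) - int (k+1)) = r" unfolding r_def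
    by (rule arg_cong[where f=rf]) simp
  have a2: "(fact (2*(k+1)) :: real) = (2*real k+1)*(2*real k+2)*a"
    unfolding a_def using fact2'[of "2*k"] by (simp add: algebra_simps)
  have h2: "((1/2)::real)^(n+1) = 2*h" unfolding h_def by (simp add: power_add)
  have h3: "((1/2)::real)^n = 4*h" unfolding h_def by (simp add: power_add)
  have L: "F3 (n+2) k = (a*u*((2*real k-real n-1)*(2*real k-real n)*v)) * (a*r*((real k+1)*((real k+1)*r))) * (4*(2*(real n-real k)+3)*(2*(real n-real k)+1)*W) * h"
    unfolding F3_def binom_rf a_def[symmetric] u_def[symmetric] v2 r0 kk m2 h_def[symmetric] by simp
  have M: "F3 (n+1) k = (a*((real n+2)*u)*((2*real k-real n)*v)) * (a*r*((real k+1)*((real k+1)*r))) * (2*(real n-real k+2)*(2*(real n-real k)+1)*W) * (2*h)"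
    unfolding F3_def binom_rf a_def[symmetric] u1 v1 r0 kk m1 h2 by simp
  have N: "F3 n k = (a*((real n+1)*(real n+2)*u)*v) * (a*r*((real k+1)*((real k+1)*r))) * ((real n-real k+1)*(real n-real k+2)*W) * (4*h)"
    unfolding F3_def binom_rf a_def[symmetric] u0 v_def[symmetric] r0 kk m0 h3 by simp
  have pk: "P3 (real n) (real (k+1)) = P3 (real n) (real k + 1)" by (simp add: add.commute)
  have P: "G3 n (k+1) = P3 (real n) (real k+1) * (((2*real k+1)*(2*real k+2)*a) * u * v) * (((2*real k+1)*(2*real k+2)*a) * r * r) * h * (2*(real n-real k+2)*W)"
    unfolding G3_def pk binom_rf a2 u_def[symmetric] v0' r_def[symmetric] kk' g1 h_def[symmetric] by simp
  have Q: "G3 n k = P3 (real n) (real k) * (a*u*((2*real k-real n-1)*(2*real k-real n)*v)) * (a*r*((real k+1)*((real k+1)*r))) * h * (4*(2*(real n-real k)+1)*W)"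
    unfolding G3_def binom_rf a_def[symmetric] u_def[symmetric] v2 r0 kk g0 h_def[symmetric] by simp
  show ?thesis unfolding L M N P Q by (rule poly3)
qed



fun fr :: "nat \<Rightarrow> real" where
 "fr 0 = 1" | "fr (Suc 0) = 2"
| "fr (Suc (Suc n)) = ((7*real n^2+21*real n+16)*fr (Suc n) + 8*(real n+1)^2*fr n)/(real n+2)^2"

lemma rec_gen:
 fixes F G :: "nat \<Rightarrow> nat \<Rightarrow> real"
 assumes Z: "\<And>n k. n < k \<Longrightarrow> F n k = 0"
 and T: "\<And>n k. (real n+2)^2 * F (n+2) k - (7*real n^2+21*real n+16) * F (n+1) k - 8*(real n+1)^2 * F n k = G n (k+1) - G n k"
 and G0: "\<And>n. G n 0 = 0" and Gt: "\<And>n. G n (n+3) = 0"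
 and I0: "F 0 0 = 1" and I1: "F 1 0 + F 1 1 = 2"
 shows "(\<Sum>k\<le>n. F n k) = fr n"
proof -
  define S where "S n = (\<Sum>k\<le>n. F n k)" for n
  have ext: "(\<Sum>k<m. F n k) = S n" if "n < m" for n m
  proof -
    have "(\<Sum>k<m. F n k) = (\<Sum>k\<le>n. F n k)"
      by (rule sum.mono_neutral_right) (use that Z in auto)
    then show ?thesis by (simp add: S_def)
  qed
  have rec: "(real n+2)^2 * S (n+2) = (7*real n^2+21*real n+16) * S (n+1) + 8*(real n+1)^2 * S n" for n
  proof -
    have "(\<Sum>k<n+3. (real n+2)^2 * F (n+2) k - (7*real n^2+21*real n+16) * F (n+1) k - 8*(real n+1)^2 * F n k)
        = (\<Sum>k<n+3. G n (Suc k) - G n k)" using T by simp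
    also have "\<dots> = 0" by (subst sum_lessThan_telescope) (simp add: G0 Gt)
    finally have "(real n+2)^2 * (\<Sum>k<n+3. F (n+2) k) - (7*real n^2+21*real n+16) * (\<Sum>k<n+3. F (n+1) k) - 8*(real n+1)^2 * (\<Sum>k<n+3. F n k) = 0"
      by (simp add: sum_subtractf sum_distrib_left)
    moreover have "(\<Sum>k<n+3. F (n+2) k) = S (n+2)" "(\<Sum>k<n+3. F (n+1) k) = S (n+1)" "(\<Sum>k<n+3. F n k) = S n"
      by (auto intro: ext)
    ultimately show ?thesis by simp
  qed
  have "S n = fr n"
  proof (induction n rule: fr.induct)
    case 1 then show ?case using I0 by (simp add: S_def)
  next
    case 2 then show ?case using I1 by (simp add: S_def)
  next
    case (3 n)
    have "(real n+2)^2 \<noteq> 0" by simp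
    then show ?case using rec[of n] 3 by (simp add: field_simps)
  qed
  then show ?thesis by (simp add: S_def)
qed

lemma S1: "(\<Sum>k\<le>n. F1 n k) = fr n"
  by (rule rec_gen[where G=G1, OF _ tele1]) (simp_all add: F1_def G1_def binomial_eq_0 del: binomial_Suc_Suc)

lemma S2: "(\<Sum>k\<le>n. F2 n k) = fr n"
  by (rule rec_gen[where G=G2, OF _ tele2]) (simp_all add: F2_def G2_def binomial_eq_0 del: binomial_Suc_Suc)

lemma S3: "(\<Sum>k\<le>n. F3 n k) = fr n"
  by (rule rec_gen[where G=G3, OF _ tele3]) (simp_all add: F3_def G3_def cbx_def)

lemma S4: "(\<Sum>k\<le>n. F4 n k) = fr n"
  by (rule rec_gen[where G=G4, OF _ tele4]) (simp_all add: F4_def G4_def rf_def numeral_3_eq_3)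

lemma S5: "(\<Sum>k\<le>n. F5 n k) = fr n"
  by (rule rec_gen[where G=G5, OF _ tele5]) (simp_all add: F5_def G5_def rf_def)



lemma cards3: "cards [n,n,n] = {..<3} \<times> {..<n}"
proof -
  have "j < 3 \<Longrightarrow> [n,n,n] ! j = n" for j
    by (cases j; cases "j - 1"; simp add: nth_Cons')
  then show ?thesis unfolding cards_def by auto
qed

definition SL :: "nat \<Rightarrow> (nat \<times> nat \<Rightarrow> nat) \<Rightarrow> nat \<Rightarrow> nat \<Rightarrow> nat set" where
  "SL n f j t = {i. i < n \<and> f (j, i) = t}"

lemma card_slice:
  "card {c \<in> cards [n,n,n]. f c = t} = card (SL n f 0 t) + card (SL n f 1 t) + card (SL n f 2 t)"
proof -
  have eq: "{c \<in> cards [n,n,n]. f c = t} = (Pair 0 ` SL n f 0 t \<union> Pair 1 ` SL n f 1 t) \<union> Pair 2 ` SL n f 2 t"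
    unfolding cards3 SL_def
  proof (intro equalityI subsetI)
    fix c assume "c \<in> {c \<in> {..<3} \<times> {..<n}. f c = t}"
    then obtain j i where c: "c = (j,i)" "j < 3" "i < n" "f (j,i) = t" by auto
    then have "j = 0 \<or> j = 1 \<or> j = 2" by auto
    then show "c \<in> (Pair 0 ` {i. i < n \<and> f (0, i) = t} \<union> Pair 1 ` {i. i < n \<and> f (1, i) = t}) \<union> Pair 2 ` {i. i < n \<and> f (2, i) = t}"
      using c by auto
  qed auto
  have fin: "finite (SL n f j t)" for j unfolding SL_def by simp
  have inj: "inj_on (Pair j) A" for j :: nat and A :: "nat set" by (simp add: inj_on_def)
  show ?thesis unfolding eq
    by (subst card_Un_disjoint, use fin in auto)+ (simp add: card_image inj)
qed

lemma card_compl_slice: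
  assumes "\<And>i. i < n \<Longrightarrow> f (j,i) = a \<or> f (j,i) = b" "a \<noteq> b"
  shows "card (SL n f j b) = n - card (SL n f j a)"
proof -
  have "SL n f j b = {..<n} - SL n f j a" using assms unfolding SL_def by auto
  moreover have "SL n f j a \<subseteq> {..<n}" unfolding SL_def by auto
  ultimately show ?thesis by (simp add: card_Diff_subset finite_subset)
qed

lemma SL_card_le: "card (SL n f j t) \<le> n"
proof -
  have "SL n f j t \<subseteq> {..<n}" unfolding SL_def by auto
  then show ?thesis using card_mono[of "{..<n}"] by fastforce
qed

definition TT :: "nat \<Rightarrow> (nat set \<times> nat set \<times> nat set) set" where
  "TT n = {(A,B,D). A \<subseteq> {..<n} \<and> B \<subseteq> {..<n} \<and> D \<subseteq> {..<n} \<and> card A = card B \<and> card B = card D}"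

definition hh :: "nat \<Rightarrow> (nat \<times> nat \<Rightarrow> nat) \<Rightarrow> nat set \<times> nat set \<times> nat set" where
  "hh n f = (SL n f 0 1, SL n f 1 2, SL n f 2 0)"

definition gg :: "nat \<Rightarrow> nat set \<times> nat set \<times> nat set \<Rightarrow> (nat \<times> nat \<Rightarrow> nat)" where
  "gg n X = restrict (\<lambda>(j,i). if j = 0 then (if i \<in> fst X then 1 else 2)
      else if j = 1 then (if i \<in> fst (snd X) then 2 else 0) else (if i \<in> snd (snd X) then 0 else 1))
      (cards [n,n,n])"

lemma bd_vals:
  assumes "f \<in> block_derangements [n,n,n]" "i < n"
  shows "f (0,i) = 1 \<or> f (0,i) = 2" "f (1,i) = 2 \<or> f (1,i) = 0" "f (2,i) = 0 \<or> f (2,i) = 1"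
proof -
  have f: "f \<in> cards [n,n,n] \<rightarrow>\<^sub>E {..<length [n,n,n]}" "\<forall>c \<in> cards [n,n,n]. f c \<noteq> fst c"
    using assms(1) unfolding block_derangements_def by blast+
  have mem: "(j,i) \<in> cards [n,n,n]" if "j < 3" for j using that assms(2) unfolding cards3 by auto
  have "f (j,i) < 3 \<and> f (j,i) \<noteq> j" if "j < 3" for j
  proof -
    have m: "(j,i) \<in> cards [n,n,n]" using that by (rule mem)
    have "f (j,i) \<in> {..<length [n,n,n]}" using f(1) m by (rule PiE_mem)
    moreover have "f (j,i) \<noteq> fst (j,i)" using f(2) m by blast
    ultimately show ?thesis by simp
  qed
  from this[of 0] this[of 1] this[of 2]
  show "f (0,i) = 1 \<or> f (0,i) = 2" "f (1,i) = 2 \<or> f (1,i) = 0" "f (2,i) = 0 \<or> f (2,i) = 1" by auto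
qed


lemma bd_count:
  assumes "f \<in> block_derangements [n,n,n]" "t < 3"
  shows "card {c \<in> cards [n,n,n]. f c = t} = n"
proof -
  have "\<forall>j < length [n,n,n]. card {c \<in> cards [n,n,n]. f c = j} = [n,n,n] ! j"
    using assms(1) unfolding block_derangements_def by blast
  then have "card {c \<in> cards [n,n,n]. f c = t} = [n,n,n] ! t" using assms(2) by simp
  moreover have "[n,n,n] ! t = n" using assms(2) by (cases t; cases "t - 1"; simp add: nth_Cons')
  ultimately show ?thesis by simp
qed

lemma hh_TT:
  assumes f: "f \<in> block_derangements [n,n,n]"
  shows "hh n f \<in> TT n"
proof -
  have e0: "SL n f 1 1 = {}" "SL n f 2 2 = {}"
    using bd_vals[OF f] unfolding SL_def by fastforce+
  have c1: "card (SL n f 2 1) = n - card (SL n f 2 0)"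
    by (rule card_compl_slice) (use bd_vals[OF f] in auto)
  have c2: "card (SL n f 0 2) = n - card (SL n f 0 1)"
    by (rule card_compl_slice) (use bd_vals[OF f] in auto)
  have n1: "card (SL n f 0 1) + card (SL n f 1 1) + card (SL n f 2 1) = n"
    using bd_count[OF f, of 1] card_slice[of n f 1] by simp
  have n2: "card (SL n f 0 2) + card (SL n f 1 2) + card (SL n f 2 2) = n"
    using bd_count[OF f, of 2] card_slice[of n f 2] by simp
  have le: "card (SL n f 2 0) \<le> n" "card (SL n f 0 1) \<le> n" by (rule SL_card_le)+
  have "card (SL n f 0 1) = card (SL n f 2 0)" using n1 e0 c1 le by simp
  moreover have "card (SL n f 0 1) = card (SL n f 1 2)" using n2 e0 c2 le by simp
  moreover have "SL n f j t \<subseteq> {..<n}" for j t unfolding SL_def by auto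
  ultimately show ?thesis unfolding hh_def TT_def by auto
qed

lemma hh_inj: "inj_on (hh n) (block_derangements [n,n,n])"
proof (rule inj_onI)
  fix f g assume f: "f \<in> block_derangements [n,n,n]" and g: "g \<in> block_derangements [n,n,n]"
    and eq: "hh n f = hh n g"
  have fP: "f \<in> cards [n,n,n] \<rightarrow>\<^sub>E {..<length [n,n,n]}" using f unfolding block_derangements_def by blast
  have gP: "g \<in> cards [n,n,n] \<rightarrow>\<^sub>E {..<length [n,n,n]}" using g unfolding block_derangements_def by blast
  have s: "SL n f 0 1 = SL n g 0 1" "SL n f 1 2 = SL n g 1 2" "SL n f 2 0 = SL n g 2 0"
    using eq unfolding hh_def by auto
  show "f = g"
  proof (rule PiE_ext[OF fP gP])
    fix c assume c: "c \<in> cards [n,n,n]"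
    then obtain j i where ji: "c = (j,i)" "j < 3" "i < n" unfolding cards3 by auto
    have "i \<in> SL n f j t \<longleftrightarrow> f (j,i) = t" "i \<in> SL n g j t \<longleftrightarrow> g (j,i) = t" for t
      using ji unfolding SL_def by auto
    moreover have "j = 0 \<or> j = 1 \<or> j = 2" using ji by auto
    ultimately show "f c = g c" using s bd_vals[OF f ji(3)] bd_vals[OF g ji(3)] ji(1) by metis
  qed
qed

lemma gg_val:
  assumes "i < n"
  shows "gg n X (0,i) = (if i \<in> fst X then 1 else 2)"
    "gg n X (1,i) = (if i \<in> fst (snd X) then 2 else 0)"
    "gg n X (2,i) = (if i \<in> snd (snd X) then 0 else 1)"
  using assms by (auto simp: gg_def cards3)

lemma TT_hh: "TT n \<subseteq> hh n ` block_derangements [n,n,n]"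
proof
  fix X assume X: "X \<in> TT n"
  obtain A B D where XA: "X = (A,B,D)" by (cases X) auto
  have sub: "A \<subseteq> {..<n}" "B \<subseteq> {..<n}" "D \<subseteq> {..<n}" and cd: "card A = card B" "card B = card D"
    using X unfolding XA TT_def by auto
  define f where "f = gg n X"
  have v: "i < n \<Longrightarrow> f (0,i) = (if i \<in> A then 1 else 2)" "i < n \<Longrightarrow> f (1,i) = (if i \<in> B then 2 else 0)"
    "i < n \<Longrightarrow> f (2,i) = (if i \<in> D then 0 else 1)" for i
    unfolding f_def XA using gg_val by auto
  have iff: "i < n \<Longrightarrow> (f (0,i) = 1 \<longleftrightarrow> i \<in> A)" "i < n \<Longrightarrow> (f (0,i) = 2 \<longleftrightarrow> i \<notin> A)"
    "i < n \<Longrightarrow> f (0,i) \<noteq> 0"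
    "i < n \<Longrightarrow> (f (1,i) = 2 \<longleftrightarrow> i \<in> B)" "i < n \<Longrightarrow> (f (1,i) = 0 \<longleftrightarrow> i \<notin> B)"
    "i < n \<Longrightarrow> f (1,i) \<noteq> 1"
    "i < n \<Longrightarrow> (f (2,i) = 0 \<longleftrightarrow> i \<in> D)" "i < n \<Longrightarrow> (f (2,i) = 1 \<longleftrightarrow> i \<notin> D)"
    "i < n \<Longrightarrow> f (2,i) \<noteq> 2" for i
    using v[of i] by simp_all
  have SLs: "SL n f 0 1 = A" "SL n f 0 2 = {..<n} - A" "SL n f 0 0 = {}"
     "SL n f 1 2 = B" "SL n f 1 0 = {..<n} - B" "SL n f 1 1 = {}"
     "SL n f 2 0 = D" "SL n f 2 1 = {..<n} - D" "SL n f 2 2 = {}"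
    unfolding SL_def using iff sub by auto
  have cA: "card A \<le> n" "card B \<le> n" "card D \<le> n" using sub card_mono[of "{..<n}"] by fastforce+
  have cdiff: "card ({..<n} - Y) = n - card Y" if "Y \<subseteq> {..<n}" for Y
    using that by (simp add: card_Diff_subset finite_subset)
  have fP: "f \<in> cards [n,n,n] \<rightarrow>\<^sub>E {..<length [n,n,n]}"
    unfolding f_def gg_def by (auto simp: restrict_PiE_iff cards3)
  have fd: "\<forall>c \<in> cards [n,n,n]. f c \<noteq> fst c"
    unfolding f_def gg_def by (auto simp: cards3)
  have cnt: "card {c \<in> cards [n,n,n]. f c = t} = n" if "t < 3" for t
  proof -
    have "t = 0 \<or> t = 1 \<or> t = 2" using that by auto
    then show ?thesis
      using card_slice[of n f t] SLs cdiff sub cd cA by auto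
  qed
  have "f \<in> block_derangements [n,n,n]"
  proof -
    have "\<forall>j < length [n,n,n]. card {c \<in> cards [n,n,n]. f c = j} = [n,n,n] ! j"
    proof (intro allI impI)
      fix j assume j: "j < length [n,n,n]"
      then have "[n,n,n] ! j = n" by (cases j; cases "j - 1"; simp add: nth_Cons')
      then show "card {c \<in> cards [n,n,n]. f c = j} = [n,n,n] ! j" using cnt j by simp
    qed
    then show ?thesis unfolding block_derangements_def using fP fd by blast
  qed
  moreover have "hh n f = X" unfolding hh_def XA using SLs by simp
  ultimately show "X \<in> hh n ` block_derangements [n,n,n]" by blast
qed

lemma card_TT: "card (TT n) = (\<Sum>k\<le>n. (n choose k) ^ 3)"
proof -
  define S where "S k = {A. A \<subseteq> {..<n} \<and> card A = k}" for k
  have cS: "card (S k) = n choose k" for k unfolding S_def using n_subsets[of "{..<n}" k] by simp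
  have fS: "finite (S k)" for k unfolding S_def by (rule finite_subset[of _ "Pow {..<n}"]) auto
  have eq: "TT n = (\<Union>k\<in>{..n}. S k \<times> S k \<times> S k)"
  proof (intro equalityI subsetI)
    fix X assume "X \<in> TT n"
    then obtain A B D where X: "X = (A,B,D)" "A \<subseteq> {..<n}" "B \<subseteq> {..<n}" "D \<subseteq> {..<n}" "card A = card B" "card B = card D"
      unfolding TT_def by auto
    have "card A \<le> n" using X(2) card_mono[of "{..<n}"] by fastforce
    then show "X \<in> (\<Union>k\<in>{..n}. S k \<times> S k \<times> S k)" using X unfolding S_def by auto
  next
    fix X assume "X \<in> (\<Union>k\<in>{..n}. S k \<times> S k \<times> S k)"
    then show "X \<in> TT n" unfolding S_def TT_def by auto
  qed
  have "card (TT n) = (\<Sum>k\<in>{..n}. card (S k \<times> S k \<times> S k))"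
    unfolding eq by (rule card_UN_disjoint) (auto simp: fS S_def)
  also have "\<dots> = (\<Sum>k\<le>n. (n choose k) ^ 3)"
    by (simp add: card_cartesian_product cS power3_eq_cube mult.assoc)
  finally show ?thesis .
qed

lemma E3: "E [n,n,n] = (\<Sum>k\<le>n. (n choose k) ^ 3)"
proof -
  have "hh n ` block_derangements [n,n,n] = TT n"
    using hh_TT TT_hh by blast
  then have "card (block_derangements [n,n,n]) = card (TT n)"
    using card_image[OF hh_inj] by metis
  then show ?thesis unfolding E_def card_TT .
qed


lemma sum_from_c:
  fixes f :: "nat \<Rightarrow> real"
  assumes "\<And>k. k < c \<Longrightarrow> f k = 0"
  shows "(\<Sum>k = c..n. f k) = (\<Sum>k\<le>n. f k)"
  by (rule sum.mono_neutral_left) (use assms in auto)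

lemma sum_upto_d:
  fixes f :: "nat \<Rightarrow> real"
  assumes "d \<le> n" "\<And>k. d < k \<Longrightarrow> k \<le> n \<Longrightarrow> f k = 0"
  shows "(\<Sum>k = 0..d. f k) = (\<Sum>k\<le>n. f k)"
  by (rule sum.mono_neutral_left) (use assms in auto)

lemma ceil_bound:
  assumes "k < nat \<lceil>real n / 2\<rceil>"
  shows "2 * k < n"
proof -
  have "int k < \<lceil>real n / 2\<rceil>" using assms by linarith
  then have "real k < real n / 2" by (simp add: less_ceiling_iff)
  then show ?thesis by linarith
qed

theorem mainTheorem6:
  fixes n :: nat
  shows "real (E [n, n, n]) = (\<Sum>k = 0..n. real (n choose k) ^ 3)
    \<and> (\<Sum>k = 0..n. real (n choose k) ^ 3)
        = (\<Sum>k = nat \<lceil>real n / 2\<rceil>..n. real (n choose k) ^ 2 * real ((2 * k) choose n))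
    \<and> (\<Sum>k = nat \<lceil>real n / 2\<rceil>..n. real (n choose k) ^ 2 * real ((2 * k) choose n))
        = (1 / 2 ^ n) * (\<Sum>k = nat \<lceil>real n / 2\<rceil>..n.
             real ((2 * k) choose n) * real ((2 * k) choose k) * real ((2 * n - 2 * k) choose (n - k)))
    \<and> (1 / 2 ^ n) * (\<Sum>k = nat \<lceil>real n / 2\<rceil>..n.
             real ((2 * k) choose n) * real ((2 * k) choose k) * real ((2 * n - 2 * k) choose (n - k)))
        = (\<Sum>k = 0..n. real ((n + 2 * k) choose (3 * k)) * real ((2 * k) choose k)
             * real ((3 * k) choose k) * (-4) ^ (n - k))
    \<and> (\<Sum>k = 0..n. real ((n + 2 * k) choose (3 * k)) * real ((2 * k) choose k)
             * real ((3 * k) choose k) * (-4) ^ (n - k))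
        = (\<Sum>k = 0..n div 2. real ((n + k) choose (3 * k)) * real ((2 * k) choose k)
             * real ((3 * k) choose k) * 2 ^ (n - 2 * k))"
proof -
  define c where "c = nat \<lceil>real n / 2\<rceil>"
  have a1: "(\<Sum>k = 0..n. real (n choose k) ^ 3) = fr n"
    using S1[of n] by (simp add: F1_def atLeast0AtMost)
  have a0: "real (E [n, n, n]) = (\<Sum>k = 0..n. real (n choose k) ^ 3)"
    unfolding E3 by (simp add: atLeast0AtMost)
  have a2: "(\<Sum>k = c..n. real (n choose k) ^ 2 * real ((2 * k) choose n)) = fr n"
  proof -
    have "(\<Sum>k = c..n. real (n choose k) ^ 2 * real ((2 * k) choose n)) = (\<Sum>k\<le>n. F2 n k)"
      unfolding F2_def by (rule sum_from_c) (use ceil_bound c_def in simp)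
    then show ?thesis using S2[of n] by simp
  qed
  have a3: "(1 / 2 ^ n) * (\<Sum>k = c..n.
             real ((2 * k) choose n) * real ((2 * k) choose k) * real ((2 * n - 2 * k) choose (n - k))) = fr n"
  proof -
    have "(1 / 2 ^ n) * (\<Sum>k = c..n.
             real ((2 * k) choose n) * real ((2 * k) choose k) * real ((2 * n - 2 * k) choose (n - k)))
        = (\<Sum>k = c..n. F3 n k)"
      unfolding sum_distrib_left
    proof (rule sum.cong)
      fix k assume "k \<in> {c..n}"
      then have kn: "k \<le> n" by simp
      have "cbx (int n - int k) = real ((2 * (n - k)) choose (n - k))"
        using kn by (simp add: cbx_def nat_diff_distrib)
      moreover have "2 * n - 2 * k = 2 * (n - k)" by simp
      ultimately show "1 / 2 ^ n * (real ((2 * k) choose n) * real ((2 * k) choose k) * real ((2 * n - 2 * k) choose (n - k))) = F3 n k"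
        unfolding F3_def by (simp add: power_divide)
    qed simp
    also have "\<dots> = (\<Sum>k\<le>n. F3 n k)"
      by (rule sum_from_c) (use ceil_bound c_def in \<open>simp add: F3_def\<close>)
    finally show ?thesis using S3[of n] by simp
  qed
  have a4: "(\<Sum>k = 0..n. real ((n + 2 * k) choose (3 * k)) * real ((2 * k) choose k)
             * real ((3 * k) choose k) * (-4) ^ (n - k)) = fr n"
    using S4[of n] by (simp add: F4_def atLeast0AtMost)
  have a5: "(\<Sum>k = 0..n div 2. real ((n + k) choose (3 * k)) * real ((2 * k) choose k)
             * real ((3 * k) choose k) * 2 ^ (n - 2 * k)) = fr n"
  proof -
    have "(\<Sum>k = 0..n div 2. real ((n + k) choose (3 * k)) * real ((2 * k) choose k)
             * real ((3 * k) choose k) * 2 ^ (n - 2 * k)) = (\<Sum>k\<le>n. F5 n k)"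
      unfolding F5_def by (rule sum_upto_d) auto
    then show ?thesis using S5[of n] by simp
  qed
  show ?thesis using a0 a1 a2 a3 a4 a5 unfolding c_def by simp
qed

end
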